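(* Let $q$ be a prime power and $F/\mathbb{F}_q$ an algebraic function field with full constant field $\mathbb{F}_q$ of genus $g\geq 2$. For $n\geq 0$ let $A_n$ be the number of effective divisors of degree $n$ of $F$, for $r\geq 1$ let $B_r$ be the number of places of degree $r$ of $F$, let $\Sigma_2=q^{g-1}\sum_{n=0}^{g-2}A_n/q^n$, let $\Delta_2=\{r:1\leq r\leq g-2,\ B_r\geq 1\}$ and $\Delta_2'=\Delta_2\setminus\{1\}$. (1) Suppose $B_1\geq 1$. Let $(m_r)_{r\in\Delta_2}$ be integers with $m_r\geq 0$ and $\sum_{r\in\Delta_2} r\,m_r\leq g-2$. Then $$\Sigma_2\geq q^{g-1}\prod_{r\in\Delta_2}\left[\sum_{b=0}^{m_r}\frac{1}{q^{rb}}\binom{B_r+b-1}{b}\right].$$ (2) Let $r_1,\dots,r_u$ be distinct elements of $\Delta_2'$. Then $$\Sigma_2\geq q^{g-1}\sum_{b_1=0}^{g-2}\frac{1}{q^{b_1}}\binom{B_1+b_1-1}{b_1}+q^{g-1}\sum_{i=1}^u\left[\sum_{b_1=0}^{(g-2)\bmod r_i}\frac{1}{q^{b_1}}\binom{B_1+b_1-1}{b_1}\right]\left[\sum_{b=0}^{\lfloor\frac{g-2}{r_i}\rfloor}\frac{1}{q^{r_ib}}\binom{B_{r_i}+b-1}{b}-1\right].$$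
   Context: $(g-2)\bmod r$ denotes the remainder of the Euclidean division of $g-2$ by $r$. Binomial coefficients $\binom{B+b-1}{b}$ (the number of multisets of size $b$ from a set of size $B$) follow the convention that for $B=0$ they equal $1$ if $b=0$ and $0$ if $b\geq 1$. *)

theory Defs
  imports Complex_Main "HOL-Library.Multiset" "HOL-Computational_Algebra.Primes"
begin

text \<open>Abstract model of the places of a function field: a set P of places with a
degree function deg. Effective divisors are finite formal sums of places with
nonnegative coefficients, i.e. multisets of places.\<close>

definition eff_divisors :: "'a set \<Rightarrow> ('a \<Rightarrow> nat) \<Rightarrow> nat \<Rightarrow> 'a multiset set" where
  "eff_divisors P deg n = {D. set_mset D \<subseteq> P \<and> sum_mset (image_mset deg D) = n}"

definition A_num :: "'a set \<Rightarrow> ('a \<Rightarrow> nat) \<Rightarrow> nat \<Rightarrow> nat" where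
  "A_num P deg n = card (eff_divisors P deg n)"

definition B_num :: "'a set \<Rightarrow> ('a \<Rightarrow> nat) \<Rightarrow> nat \<Rightarrow> nat" where
  "B_num P deg r = card {p \<in> P. deg p = r}"

definition Sigma2 :: "'a set \<Rightarrow> ('a \<Rightarrow> nat) \<Rightarrow> nat \<Rightarrow> nat \<Rightarrow> real" where
  "Sigma2 P deg q g = real q ^ (g - 1) * (\<Sum>n = 0..g - 2. real (A_num P deg n) / real q ^ n)"

definition Delta2 :: "'a set \<Rightarrow> ('a \<Rightarrow> nat) \<Rightarrow> nat \<Rightarrow> nat set" where
  "Delta2 P deg g = {r. 1 \<le> r \<and> r \<le> g - 2 \<and> B_num P deg r \<ge> 1}"

text \<open>Number of multisets of size b from a set of size B, with the stated convention for B = 0.\<close>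
definition multichoose :: "nat \<Rightarrow> nat \<Rightarrow> nat" where
  "multichoose B b = (if B = 0 then (if b = 0 then 1 else 0) else (B + b - 1) choose b)"

definition prime_power :: "nat \<Rightarrow> bool" where
  "prime_power q \<longleftrightarrow> (\<exists>p k. prime p \<and> k \<ge> 1 \<and> q = p ^ k)"

end

theory Submission
  imports Defs
begin

definition dsum :: "('a \<Rightarrow> nat) \<Rightarrow> 'a multiset \<Rightarrow> nat" where
  "dsum deg D = sum_mset (image_mset deg D)"

definition SK :: "'a set \<Rightarrow> ('a \<Rightarrow> nat) \<Rightarrow> nat set \<Rightarrow> (nat \<Rightarrow> nat) \<Rightarrow> 'a multiset set" where
  "SK P deg K m = {D. set_mset D \<subseteq> P \<and> (\<forall>x\<in>#D. deg x \<in> K) \<and>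
      (\<forall>r\<in>K. size (filter_mset (\<lambda>x. deg x = r) D) \<le> m r)}"

lemma dsum_add[simp]: "dsum deg (A + B) = dsum deg A + dsum deg B"
  by (simp add: dsum_def)

lemma dsum_const: "(\<forall>x\<in>#D. deg x = k) \<Longrightarrow> dsum deg D = k * size D"
  by (induction D) (auto simp: dsum_def)

lemma size_le_dsum: "(\<forall>x\<in>#D. deg x \<ge> 1) \<Longrightarrow> size D \<le> dsum deg D"
  by (induction D) (auto simp: dsum_def)

lemma multichoose_eq: "multichoose B b = (B + b - 1) choose b"
  by (cases b) (auto simp: multichoose_def)

lemma SK_empty: "SK P deg {} m = {{#}}"
  by (auto simp: SK_def)

lemma SK_single:
  "SK P deg {k} m = (\<Union>b\<in>{0..m k}. multisets_of_size {p\<in>P. deg p = k} b)"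
proof -
  have f: "set_mset D \<subseteq> {p\<in>P. deg p = k} \<Longrightarrow> filter_mset (\<lambda>x. deg x = k) D = D" for D
    by (auto simp add: filter_mset_eq_conv)
  have f': "\<forall>x\<in>#D. deg x = k \<Longrightarrow> filter_mset (\<lambda>x. deg x = k) D = D" for D
    by (auto simp add: filter_mset_eq_conv)
  show ?thesis
    by (auto simp: SK_def multisets_of_size_def f f')
qed

lemma sum_SK_single:
  assumes fin: "finite {p\<in>P. deg p = k}"
  shows "(\<Sum>D\<in>SK P deg {k} m. 1 / real q ^ dsum deg D) =
     (\<Sum>b = 0..m k. real (multichoose (B_num P deg k) b) / real q ^ (k * b))"
proof -
  have "(\<Sum>D\<in>SK P deg {k} m. 1 / real q ^ dsum deg D) =
      (\<Sum>b = 0..m k. \<Sum>D\<in>multisets_of_size {p\<in>P. deg p = k} b. 1 / real q ^ dsum deg D)"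
    unfolding SK_single
    by (rule sum.UNION_disjoint) (auto simp: fin finite_multisets_of_size, auto simp: multisets_of_size_def)
  also have "\<dots> = (\<Sum>b = 0..m k. real (multichoose (B_num P deg k) b) / real q ^ (k * b))"
  proof (rule sum.cong[OF refl])
    fix b
    have "(\<Sum>D\<in>multisets_of_size {p\<in>P. deg p = k} b. 1 / real q ^ dsum deg D)
       = (\<Sum>D\<in>multisets_of_size {p\<in>P. deg p = k} b. 1 / real q ^ (k * b))"
    proof (rule sum.cong[OF refl])
      fix D assume "D \<in> multisets_of_size {p\<in>P. deg p = k} b"
      hence "dsum deg D = k * b" by (subst dsum_const) (auto simp: multisets_of_size_def)
      thus "1 / real q ^ dsum deg D = 1 / real q ^ (k * b)" by simp
    qed
    also have "\<dots> = real (multichoose (B_num P deg k) b) / real q ^ (k * b)"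
      using card_multisets_of_size[OF fin, of b]
      by (simp add: multichoose_eq B_num_def)
    finally show "(\<Sum>D\<in>multisets_of_size {p\<in>P. deg p = k} b. 1 / real q ^ dsum deg D)
       = real (multichoose (B_num P deg k) b) / real q ^ (k * b)" .
  qed
  finally show ?thesis .
qed

lemma SK_insert:
  assumes "k \<notin> K"
  shows "SK P deg (insert k K) m = (\<lambda>(A,B). A + B) ` (SK P deg {k} m \<times> SK P deg K m)"
    and "inj_on (\<lambda>(A,B). A + B) (SK P deg {k} m \<times> SK P deg K m)"
proof -
  have fk: "filter_mset (\<lambda>x. deg x = k) B = {#}" if "B \<in> SK P deg K m" for B
    using that assms by (auto simp: SK_def)
  have fk2: "filter_mset (\<lambda>x. deg x = k) A = A" if "A \<in> SK P deg {k} m" for A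
    using that by (auto simp: SK_def filter_mset_eq_conv)
  have fr: "filter_mset (\<lambda>x. deg x = r) A = {#}" if "A \<in> SK P deg {k} m" "r \<noteq> k" for A r
    using that by (auto simp: SK_def)
  show "inj_on (\<lambda>(A,B). A + B) (SK P deg {k} m \<times> SK P deg K m)"
  proof (rule inj_onI, clarsimp)
    fix A B A' B'
    assume h: "A \<in> SK P deg {k} m" "B \<in> SK P deg K m" "A' \<in> SK P deg {k} m" "B' \<in> SK P deg K m"
      "A + B = A' + B'"
    have "filter_mset (\<lambda>x. deg x = k) (A + B) = filter_mset (\<lambda>x. deg x = k) (A' + B')"
      using h by simp
    have e1: "filter_mset (\<lambda>x. deg x = k) (A + B) = A" using fk[OF h(2)] fk2[OF h(1)] by (simp del: filter_mset_eq_mempty_iff)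
    have e2: "filter_mset (\<lambda>x. deg x = k) (A' + B') = A'" using fk[OF h(4)] fk2[OF h(3)] by (simp del: filter_mset_eq_mempty_iff)
    have "A = A'" using e1 e2 h(5) by simp
    thus "A = A' \<and> B = B'" using h by simp
  qed
  show "SK P deg (insert k K) m = (\<lambda>(A,B). A + B) ` (SK P deg {k} m \<times> SK P deg K m)"
  proof
    show "(\<lambda>(A,B). A + B) ` (SK P deg {k} m \<times> SK P deg K m) \<subseteq> SK P deg (insert k K) m"
    proof clarsimp
      fix A B assume h: "A \<in> SK P deg {k} m" "B \<in> SK P deg K m"
      have "size (filter_mset (\<lambda>x. deg x = r) (A + B)) \<le> m r" if "r \<in> insert k K" for r
      proof (cases "r = k")
        case True
        have "filter_mset (\<lambda>x. deg x = r) (A + B) = A" using True fk[OF h(2)] fk2[OF h(1)] by (simp del: filter_mset_eq_mempty_iff)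
        moreover have "size (filter_mset (\<lambda>x. deg x = k) A) \<le> m k" using h(1) unfolding SK_def by blast
        ultimately show ?thesis using True fk2[OF h(1)] by metis
      next
        case False
        have "filter_mset (\<lambda>x. deg x = r) (A + B) = filter_mset (\<lambda>x. deg x = r) B"
          using False fr[OF h(1) False] by simp
        moreover have "r \<in> K" using False that by simp
        moreover have "size (filter_mset (\<lambda>x. deg x = r) B) \<le> m r"
          using h(2) \<open>r \<in> K\<close> unfolding SK_def by blast
        ultimately show ?thesis by metis
      qed
      moreover have "set_mset (A + B) \<subseteq> P" "\<forall>x\<in>#A + B. deg x \<in> insert k K"
        using h unfolding SK_def by auto
      ultimately show "A + B \<in> SK P deg (insert k K) m" unfolding SK_def by blast
    qed
  next
    show "SK P deg (insert k K) m \<subseteq> (\<lambda>(A,B). A + B) ` (SK P deg {k} m \<times> SK P deg K m)"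
    proof
      fix D assume D: "D \<in> SK P deg (insert k K) m"
      let ?A = "filter_mset (\<lambda>x. deg x = k) D" and ?B = "filter_mset (\<lambda>x. \<not> deg x = k) D"
      have c1: "D = ?A + ?B" by (rule multiset_partition)
      have c2: "?A \<in> SK P deg {k} m" using D by (auto simp: SK_def filter_filter_mset)
      have c3: "?B \<in> SK P deg K m"
      proof -
        have "size (filter_mset (\<lambda>x. deg x = r) ?B) \<le> m r" if "r \<in> K" for r
        proof -
          have "filter_mset (\<lambda>x. deg x = r) ?B = filter_mset (\<lambda>x. deg x = r) D"
            using that assms by (auto simp: filter_filter_mset intro!: filter_mset_cong)
          thus ?thesis using D that by (auto simp: SK_def)
        qed
        thus ?thesis using D by (auto simp: SK_def)
      qed
      show "D \<in> (\<lambda>(A,B). A + B) ` (SK P deg {k} m \<times> SK P deg K m)"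
      proof (rule image_eqI[where x="(?A,?B)"])
        show "D = (\<lambda>(A,B). A + B) (?A, ?B)" using c1 by (simp only: prod.case)
        show "(?A, ?B) \<in> SK P deg {k} m \<times> SK P deg K m" using c2 c3 by blast
      qed
    qed
  qed
qed

lemma sum_SK:
  assumes "finite K" and fin: "\<forall>r. finite {p \<in> P. deg p = r}"
  shows "(\<Sum>D\<in>SK P deg K m. 1 / real q ^ dsum deg D) =
     (\<Prod>r\<in>K. \<Sum>b = 0..m r. real (multichoose (B_num P deg r) b) / real q ^ (r * b))"
  using assms(1)
proof (induction K rule: finite_induct)
  case empty
  thus ?case by (simp add: SK_empty dsum_def)
next
  case (insert k K)
  have "(\<Sum>D\<in>SK P deg (insert k K) m. 1 / real q ^ dsum deg D)
     = (\<Sum>D\<in>(\<lambda>(A,B). A + B) ` (SK P deg {k} m \<times> SK P deg K m). 1 / real q ^ dsum deg D)"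
    by (simp only: SK_insert(1)[OF insert(2)])
  also have "\<dots> = (\<Sum>X\<in>SK P deg {k} m \<times> SK P deg K m. 1 / real q ^ dsum deg ((\<lambda>(A,B). A + B) X))"
    by (rule sum.reindex_cong[OF SK_insert(2)[OF insert(2)] refl refl])
  also have "\<dots> = (\<Sum>(A,B)\<in>SK P deg {k} m \<times> SK P deg K m. (1 / real q ^ dsum deg A) * (1 / real q ^ dsum deg B))"
    by (intro sum.cong refl) (auto simp: power_add)
  also have "\<dots> = (\<Sum>A\<in>SK P deg {k} m. \<Sum>B\<in>SK P deg K m. (1 / real q ^ dsum deg A) * (1 / real q ^ dsum deg B))"
    by (simp only: sum.cartesian_product)
  also have "\<dots> = (\<Sum>A\<in>SK P deg {k} m. 1 / real q ^ dsum deg A) * (\<Sum>B\<in>SK P deg K m. 1 / real q ^ dsum deg B)"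
    by (simp only: sum_product)
  also have "\<dots> = (\<Prod>r\<in>insert k K. \<Sum>b = 0..m r. real (multichoose (B_num P deg r) b) / real q ^ (r * b))"
    by (simp only: prod.insert[OF insert.hyps] insert.IH sum_SK_single[OF fin[rule_format]])
  finally show ?case .
qed

lemma dsum_SK:
  assumes "finite K"
  shows "D \<in> SK P deg K m \<Longrightarrow> dsum deg D \<le> (\<Sum>r\<in>K. r * m r)"
  using assms
proof (induction K arbitrary: D rule: finite_induct)
  case empty
  thus ?case by (simp add: SK_empty dsum_def)
next
  case (insert k K)
  from insert(4) obtain X where X: "X \<in> SK P deg {k} m \<times> SK P deg K m" "D = (\<lambda>(A,B). A + B) X"
    unfolding SK_insert(1)[OF insert(2)] by blast
  obtain A B where AB: "A \<in> SK P deg {k} m" "B \<in> SK P deg K m" "D = A + B"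
    using X by (cases X) auto
  have "dsum deg A = k * size A" using AB(1) by (intro dsum_const) (auto simp: SK_def)
  also have "size A \<le> m k"
  proof -
    have "filter_mset (\<lambda>x. deg x = k) A = A" using AB(1) by (auto simp: SK_def filter_mset_eq_conv)
    thus ?thesis using AB(1) by (auto simp: SK_def)
  qed
  hence "k * size A \<le> k * m k" by simp
  finally show ?case using insert(3)[OF AB(2)] AB(3) insert(2) insert(1) by simp
qed


lemma deg_le_dsum: "x \<in># D \<Longrightarrow> deg x \<le> dsum deg D"
  by (induction D) (auto simp: dsum_def)

lemma finite_eff:
  assumes deg_pos: "\<forall>p\<in>P. deg p \<ge> 1" and fin: "\<forall>r. finite {p \<in> P. deg p = r}"
  shows "finite (eff_divisors P deg n)"
proof -
  have fX: "finite {p\<in>P. deg p \<le> n}"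
  proof -
    have "{p\<in>P. deg p \<le> n} = (\<Union>r\<in>{..n}. {p \<in> P. deg p = r})" by auto
    thus ?thesis using fin by simp
  qed
  have "eff_divisors P deg n \<subseteq> (\<Union>b\<in>{0..n}. multisets_of_size {p\<in>P. deg p \<le> n} b)"
  proof
    fix D assume D: "D \<in> eff_divisors P deg n"
    hence s: "set_mset D \<subseteq> P" "dsum deg D = n" by (auto simp: eff_divisors_def dsum_def)
    have "size D \<le> n" using size_le_dsum[of D deg] s deg_pos by auto
    moreover have "set_mset D \<subseteq> {p\<in>P. deg p \<le> n}" using s deg_le_dsum[of _ D deg] by auto
    ultimately show "D \<in> (\<Union>b\<in>{0..n}. multisets_of_size {p\<in>P. deg p \<le> n} b)"
      by (auto simp: multisets_of_size_def)
  qed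
  moreover have "finite (\<Union>b\<in>{0..n}. multisets_of_size {p\<in>P. deg p \<le> n} b)"
    using fX by (auto intro: finite_multisets_of_size)
  ultimately show ?thesis by (rule finite_subset)
qed

definition UU :: "'a set \<Rightarrow> ('a \<Rightarrow> nat) \<Rightarrow> nat \<Rightarrow> 'a multiset set" where
  "UU P deg N = {D. set_mset D \<subseteq> P \<and> dsum deg D \<le> N}"

lemma UU_eq: "UU P deg N = (\<Union>n\<in>{0..N}. eff_divisors P deg n)"
  by (auto simp: UU_def eff_divisors_def dsum_def)

lemma finite_UU:
  assumes deg_pos: "\<forall>p\<in>P. deg p \<ge> 1" and fin: "\<forall>r. finite {p \<in> P. deg p = r}"
  shows "finite (UU P deg N)"
  unfolding UU_eq using finite_eff[OF assms] by auto

lemma sum_UU: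
  assumes deg_pos: "\<forall>p\<in>P. deg p \<ge> 1" and fin: "\<forall>r. finite {p \<in> P. deg p = r}"
  shows "(\<Sum>n = 0..N. real (A_num P deg n) / real q ^ n) = (\<Sum>D\<in>UU P deg N. 1 / real q ^ dsum deg D)"
proof -
  have "(\<Sum>D\<in>UU P deg N. 1 / real q ^ dsum deg D) =
     (\<Sum>n = 0..N. \<Sum>D\<in>eff_divisors P deg n. 1 / real q ^ dsum deg D)"
    unfolding UU_eq
    by (rule sum.UNION_disjoint) (auto simp: finite_eff[OF assms], auto simp: eff_divisors_def)
  also have "\<dots> = (\<Sum>n = 0..N. real (A_num P deg n) / real q ^ n)"
  proof (rule sum.cong[OF refl])
    fix n
    have "(\<Sum>D\<in>eff_divisors P deg n. 1 / real q ^ dsum deg D) = (\<Sum>D\<in>eff_divisors P deg n. 1 / real q ^ n)"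
      by (rule sum.cong) (auto simp: eff_divisors_def dsum_def)
    thus "(\<Sum>D\<in>eff_divisors P deg n. 1 / real q ^ dsum deg D) = real (A_num P deg n) / real q ^ n"
      by (simp add: A_num_def)
  qed
  finally show ?thesis by simp
qed

lemma Sigma2_ge:
  assumes deg_pos: "\<forall>p\<in>P. deg p \<ge> 1" and fin: "\<forall>r. finite {p \<in> P. deg p = r}"
    and S: "S \<subseteq> UU P deg (g - 2)"
  shows "Sigma2 P deg q g \<ge> real q ^ (g - 1) * (\<Sum>D\<in>S. 1 / real q ^ dsum deg D)"
proof -
  have "(\<Sum>D\<in>S. 1 / real q ^ dsum deg D) \<le> (\<Sum>D\<in>UU P deg (g - 2). 1 / real q ^ dsum deg D)"
    by (rule sum_mono2[OF finite_UU[OF deg_pos fin] S]) auto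
  thus ?thesis unfolding Sigma2_def sum_UU[OF deg_pos fin]
    by (intro mult_left_mono) auto
qed


theorem theorem3p8:
  fixes P :: "'a set" and deg :: "'a \<Rightarrow> nat" and q g :: nat
  assumes q: "prime_power q"
    and g: "g \<ge> 2"
    and deg_pos: "\<forall>p\<in>P. deg p \<ge> 1"
    and fin: "\<forall>r. finite {p \<in> P. deg p = r}"
  shows
    "(\<forall>m :: nat \<Rightarrow> nat.
        B_num P deg 1 \<ge> 1 \<and> (\<Sum>r\<in>Delta2 P deg g. r * m r) \<le> g - 2 \<longrightarrow>
        Sigma2 P deg q g \<ge> real q ^ (g - 1) *
          (\<Prod>r\<in>Delta2 P deg g. \<Sum>b = 0..m r.
              real (multichoose (B_num P deg r) b) / real q ^ (r * b)))
     \<and>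
     (\<forall>R :: nat set. R \<subseteq> Delta2 P deg g - {1} \<longrightarrow>
        Sigma2 P deg q g \<ge>
          real q ^ (g - 1) * (\<Sum>b1 = 0..g - 2. real (multichoose (B_num P deg 1) b1) / real q ^ b1)
          + real q ^ (g - 1) * (\<Sum>r\<in>R.
              (\<Sum>b1 = 0..(g - 2) mod r. real (multichoose (B_num P deg 1) b1) / real q ^ b1)
              * ((\<Sum>b = 0..(g - 2) div r.
                    real (multichoose (B_num P deg r) b) / real q ^ (r * b)) - 1)))"
proof -
  have Dfin: "finite (Delta2 P deg g)"
    by (rule finite_subset[of _ "{1..g-2}"]) (auto simp: Delta2_def)
  have part1: "Sigma2 P deg q g \<ge> real q ^ (g - 1) *
          (\<Prod>r\<in>Delta2 P deg g. \<Sum>b = 0..m r.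
              real (multichoose (B_num P deg r) b) / real q ^ (r * b))"
    if hm: "(\<Sum>r\<in>Delta2 P deg g. r * m r) \<le> g - 2" for m :: "nat \<Rightarrow> nat"
  proof -
    have "SK P deg (Delta2 P deg g) m \<subseteq> UU P deg (g - 2)"
      using dsum_SK[OF Dfin] hm by (fastforce simp: UU_def SK_def)
    from Sigma2_ge[OF deg_pos fin this] show ?thesis
      by (simp only: sum_SK[OF Dfin fin])
  qed
  have part2: "Sigma2 P deg q g \<ge>
          real q ^ (g - 1) * (\<Sum>b1 = 0..g - 2. real (multichoose (B_num P deg 1) b1) / real q ^ b1)
          + real q ^ (g - 1) * (\<Sum>r\<in>R.
              (\<Sum>b1 = 0..(g - 2) mod r. real (multichoose (B_num P deg 1) b1) / real q ^ b1)
              * ((\<Sum>b = 0..(g - 2) div r.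
                    real (multichoose (B_num P deg r) b) / real q ^ (r * b)) - 1))"
    if hR: "R \<subseteq> Delta2 P deg g - {1}" for R
  proof -
    define N where "N = g - 2"
    define w where "w = (\<lambda>D. 1 / real q ^ dsum deg D)"
    define mr where "mr = (\<lambda>r (x::nat). if x = 1 then N mod r else N div r)"
    define T0 where "T0 = SK P deg {1} (\<lambda>_. N)"
    define T where "T = (\<lambda>r. SK P deg {1, r} (mr r) - SK P deg {1} (mr r))"
    have Rfin: "finite R" using hR Dfin finite_subset by blast
    have Rr: "r \<noteq> 1" "r \<ge> 1" if "r \<in> R" for r using hR that by (auto simp: Delta2_def)
    have fin2: "finite {1, r}" for r :: nat by simp
    have s0: "sum w T0 = (\<Sum>b1 = 0..N. real (multichoose (B_num P deg 1) b1) / real q ^ b1)"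
      unfolding T0_def w_def by (subst sum_SK[OF _ fin]) auto
    have T0U: "T0 \<subseteq> UU P deg N"
      using dsum_SK[of "{1}" _ P deg "\<lambda>_. N"] by (fastforce simp: UU_def SK_def T0_def)
    have sub: "SK P deg {1} (mr r) \<subseteq> SK P deg {1, r} (mr r)" if "r \<in> R" for r
    proof
      fix D assume D: "D \<in> SK P deg {1} (mr r)"
      have "filter_mset (\<lambda>x. deg x = r) D = {#}" using D Rr[OF that] by (auto simp: SK_def)
      hence z: "size (filter_mset (\<lambda>x. deg x = r) D) = 0" by simp
      have b1: "size (filter_mset (\<lambda>x. deg x = 1) D) \<le> mr r 1" using D unfolding SK_def by blast
      have "\<forall>r'\<in>{1, r}. size (filter_mset (\<lambda>x. deg x = r') D) \<le> mr r r'"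
        using b1 z by (metis empty_iff insert_iff le0)
      moreover have "set_mset D \<subseteq> P" "\<forall>x\<in>#D. deg x \<in> {1, r}" using D unfolding SK_def by auto
      ultimately show "D \<in> SK P deg {1, r} (mr r)" unfolding SK_def by blast
    qed
    have bigU: "SK P deg {1, r} (mr r) \<subseteq> UU P deg N" if "r \<in> R" for r
    proof
      fix D assume D: "D \<in> SK P deg {1, r} (mr r)"
      have "dsum deg D \<le> (\<Sum>x\<in>{1, r}. x * mr r x)" by (rule dsum_SK[OF fin2 D])
      also have "\<dots> = N mod r + r * (N div r)" using Rr[OF that] by (simp add: mr_def)
      also have "\<dots> = N" by simp
      finally show "D \<in> UU P deg N" using D by (auto simp: UU_def SK_def)
    qed
    have finU: "finite (UU P deg N)" by (rule finite_UU[OF deg_pos fin])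
    have sT: "sum w (T r) = (\<Sum>b1 = 0..N mod r. real (multichoose (B_num P deg 1) b1) / real q ^ b1)
              * ((\<Sum>b = 0..N div r. real (multichoose (B_num P deg r) b) / real q ^ (r * b)) - 1)"
      if r: "r \<in> R" for r
    proof -
      have f1: "finite (SK P deg {1, r} (mr r))" using bigU[OF r] finU finite_subset by blast
      have "sum w (SK P deg {1, r} (mr r)) = sum w (T r) + sum w (SK P deg {1} (mr r))"
        unfolding T_def by (rule sum.subset_diff[OF sub[OF r] f1])
      moreover have "sum w (SK P deg {1, r} (mr r)) =
          (\<Sum>b = 0..N div r. real (multichoose (B_num P deg r) b) / real q ^ (r * b)) *
          (\<Sum>b1 = 0..N mod r. real (multichoose (B_num P deg 1) b1) / real q ^ b1)"
        unfolding w_def using Rr[OF r]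
        by (subst sum_SK[OF fin2 fin]) (simp add: mr_def)
      moreover have "sum w (SK P deg {1} (mr r)) =
          (\<Sum>b1 = 0..N mod r. real (multichoose (B_num P deg 1) b1) / real q ^ b1)"
        unfolding w_def by (subst sum_SK[OF _ fin]) (auto simp: mr_def)
      ultimately show ?thesis by (simp add: algebra_simps)
    qed
    have Tprop: "(\<forall>x\<in>#D. deg x \<in> {1, r}) \<and> (\<exists>x\<in>#D. deg x = r)" if r: "r \<in> R" and D: "D \<in> T r" for r D
    proof -
      have D1: "D \<in> SK P deg {1, r} (mr r)" and D2: "D \<notin> SK P deg {1} (mr r)" using D by (auto simp: T_def)
      have a: "\<forall>x\<in>#D. deg x \<in> {1, r}" using D1 by (simp add: SK_def)
      show ?thesis
      proof (rule ccontr)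
        assume "\<not> ?thesis"
        hence "\<forall>x\<in>#D. deg x = 1" using a by auto
        hence "D \<in> SK P deg {1} (mr r)" using D1 by (auto simp: SK_def)
        thus False using D2 by blast
      qed
    qed
    have T0prop: "\<forall>x\<in>#D. deg x = 1" if "D \<in> T0" for D using that by (auto simp: T0_def SK_def)
    have finT: "finite (T r)" if "r \<in> R" for r
      using bigU[OF that] finU finite_subset[of "T r"] by (auto simp: T_def)
    have finT0: "finite T0" using T0U finU finite_subset by blast
    have disj0: "T0 \<inter> (\<Union>r\<in>R. T r) = {}"
    proof (rule ccontr)
      assume "T0 \<inter> (\<Union>r\<in>R. T r) \<noteq> {}"
      then obtain D r where "D \<in> T0" "r \<in> R" "D \<in> T r" by blast
      thus False using T0prop Tprop Rr by fastforce
    qed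
    have disjR: "\<forall>r\<in>R. \<forall>r'\<in>R. r \<noteq> r' \<longrightarrow> T r \<inter> T r' = {}"
    proof (intro ballI impI)
      fix r r' assume h: "r \<in> R" "r' \<in> R" "r \<noteq> r'"
      show "T r \<inter> T r' = {}"
      proof (rule ccontr)
        assume "T r \<inter> T r' \<noteq> {}"
        then obtain D where "D \<in> T r" "D \<in> T r'" by blast
        with Tprop[OF h(1)] Tprop[OF h(2)] obtain x where "x \<in># D" "deg x = r" "deg x \<in> {1, r'}"
          by blast
        thus False using h Rr by auto
      qed
    qed
    have WU: "T0 \<union> (\<Union>r\<in>R. T r) \<subseteq> UU P deg N"
      using T0U bigU by (auto simp: T_def)
    have "sum w (T0 \<union> (\<Union>r\<in>R. T r)) = sum w T0 + sum w (\<Union>r\<in>R. T r)"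
      by (rule sum.union_disjoint[OF finT0 _ disj0]) (use Rfin finT in auto)
    also have "sum w (\<Union>r\<in>R. T r) = (\<Sum>r\<in>R. sum w (T r))"
      by (rule sum.UNION_disjoint[OF Rfin]) (use finT disjR in auto)
    also have "\<dots> = (\<Sum>r\<in>R. (\<Sum>b1 = 0..N mod r. real (multichoose (B_num P deg 1) b1) / real q ^ b1)
              * ((\<Sum>b = 0..N div r. real (multichoose (B_num P deg r) b) / real q ^ (r * b)) - 1))"
      by (rule sum.cong[OF refl]) (rule sT)
    finally have eq: "sum w (T0 \<union> (\<Union>r\<in>R. T r)) = (\<Sum>b1 = 0..N. real (multichoose (B_num P deg 1) b1) / real q ^ b1)
        + (\<Sum>r\<in>R. (\<Sum>b1 = 0..N mod r. real (multichoose (B_num P deg 1) b1) / real q ^ b1)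
              * ((\<Sum>b = 0..N div r. real (multichoose (B_num P deg r) b) / real q ^ (r * b)) - 1))"
      using s0 by simp
    have "Sigma2 P deg q g \<ge> real q ^ (g - 1) * sum w (T0 \<union> (\<Union>r\<in>R. T r))"
      using Sigma2_ge[OF deg_pos fin WU[unfolded N_def]] unfolding w_def by simp
    thus ?thesis unfolding eq N_def by (simp add: distrib_left)
  qed
  show ?thesis using part1 part2 by blast
qed

end
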